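(* Let $(\mathcal T,\{B_i\})$ be a tree decomposition of a graph $G$, rooted at $r$, with every node at level at most $d$; let $k\ge 1$ and $q\in\mathbb N$, and set $m_j := k^{j/q}\,d/k$ for $j=0,\dots,q-1$, assumed to be positive integers. Define the layer of a node $v$ as $\pi(v):=\max\big(\{-1\}\cup\{j\in\{0,\dots,q-1\}: \ell(v)\equiv 0 \pmod{m_j}\}\big)$. Define new bags $B'_r:=B_r$ and, for $v\neq r$, $$B'_v := B_v\cup\bigcup\Big\{B_w : w\in\mathcal T_{p(v)\leftrightarrow r},\ \pi(w)=\max\{\pi(u): u\in \mathcal T_{p(v)\leftrightarrow w}\}\Big\}.$$ Then $(\mathcal T,\{B'_v\})$ has combinatorial diameter at most $2q+1$.
   Context: Tree decomposition: tree with bags covering vertices and edges of $G$, each vertex's bags forming a connected subtree. $\mathcal T_{x\leftrightarrow y}$ is the set of nodes on the unique $x$–$y$ path in $\mathcal T$ (including $x$ and $y$); $p(v)$ is the parent of $v$; the level $\ell(v)$ is the number of edges on $\mathcal T_{v\leftrightarrow r}$. Combinatorial diameter: for nodes $s,t$ consider the path $\mathcal T_{s\leftrightarrow t}$. A non-endpoint node $v$ of the current path, with its two neighbours on the current path labelled $u,w$ (in some order), is redundant if $B_v\cap B_w\subseteq B_u$; bypassing $v$ deletes $v$ and joins $u,w$. The path has combinatorial length at most $\ell$ if repeatedly bypassing redundant nodes (redundancy evaluated in the current path) yields a path with at most $\ell$ edges. The combinatorial diameter is the minimum $\delta$ such that every path $\mathcal T_{u\leftrightarrow v}$ has combinatorial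 length at most $\delta$ (with respect to the given bags). *)

theory Defs
  imports Complex_Main
begin

definition rooted_tree :: "'n set \<Rightarrow> 'n \<Rightarrow> ('n \<Rightarrow> 'n) \<Rightarrow> bool" where
  "rooted_tree N r p \<longleftrightarrow> r \<in> N \<and> (\<forall>v\<in>N - {r}. p v \<in> N) \<and> (\<forall>v\<in>N. \<exists>i. (p ^^ i) v = r)"

definition tadj :: "'n set \<Rightarrow> 'n \<Rightarrow> ('n \<Rightarrow> 'n) \<Rightarrow> 'n \<Rightarrow> 'n \<Rightarrow> bool" where
  "tadj N r p x y \<longleftrightarrow> x \<in> N \<and> y \<in> N \<and> ((x \<noteq> r \<and> p x = y) \<or> (y \<noteq> r \<and> p y = x))"

definition is_tpath :: "'n set \<Rightarrow> 'n \<Rightarrow> ('n \<Rightarrow> 'n) \<Rightarrow> 'n list \<Rightarrow> 'n \<Rightarrow> 'n \<Rightarrow> bool" where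
  "is_tpath N r p xs x y \<longleftrightarrow> xs \<noteq> [] \<and> hd xs = x \<and> last xs = y \<and> distinct xs \<and> set xs \<subseteq> N \<and>
     (\<forall>i. Suc i < length xs \<longrightarrow> tadj N r p (xs ! i) (xs ! Suc i))"

definition tpath_set :: "'n set \<Rightarrow> 'n \<Rightarrow> ('n \<Rightarrow> 'n) \<Rightarrow> 'n \<Rightarrow> 'n \<Rightarrow> 'n set" where
  "tpath_set N r p x y = {z. \<exists>xs. is_tpath N r p xs x y \<and> z \<in> set xs}"

definition level :: "'n \<Rightarrow> ('n \<Rightarrow> 'n) \<Rightarrow> 'n \<Rightarrow> nat" where
  "level r p v = (LEAST i. (p ^^ i) v = r)"

definition tree_decomposition ::
  "'a set \<Rightarrow> ('a \<Rightarrow> 'a \<Rightarrow> bool) \<Rightarrow> 'n set \<Rightarrow> 'n \<Rightarrow> ('n \<Rightarrow> 'n) \<Rightarrow> ('n \<Rightarrow> 'a set) \<Rightarrow> bool" where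
  "tree_decomposition V E N r p B \<longleftrightarrow>
     rooted_tree N r p \<and>
     (\<forall>t\<in>N. B t \<subseteq> V) \<and>
     (\<forall>x\<in>V. \<exists>t\<in>N. x \<in> B t) \<and>
     (\<forall>x y. E x y \<longrightarrow> (\<exists>t\<in>N. x \<in> B t \<and> y \<in> B t)) \<and>
     (\<forall>x\<in>V. \<forall>s\<in>N. \<forall>t\<in>N. x \<in> B s \<and> x \<in> B t \<longrightarrow> (\<forall>u\<in>tpath_set N r p s t. x \<in> B u))"

definition graph :: "'a set \<Rightarrow> ('a \<Rightarrow> 'a \<Rightarrow> bool) \<Rightarrow> bool" where
  "graph V E \<longleftrightarrow> (\<forall>x y. E x y \<longrightarrow> x \<in> V \<and> y \<in> V \<and> E y x \<and> x \<noteq> y)"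

text \<open>Bypassing a redundant non-endpoint node v with current neighbours a, b
  (redundancy with the neighbours labelled u,w in either order).\<close>
inductive bypass_step :: "('n \<Rightarrow> 'a set) \<Rightarrow> 'n list \<Rightarrow> 'n list \<Rightarrow> bool" for C where
  "C v \<inter> C b \<subseteq> C a \<or> C v \<inter> C a \<subseteq> C b \<Longrightarrow>
     bypass_step C (as @ [a, v, b] @ bs) (as @ [a, b] @ bs)"

definition comb_length_le :: "('n \<Rightarrow> 'a set) \<Rightarrow> 'n list \<Rightarrow> nat \<Rightarrow> bool" where
  "comb_length_le C xs l \<longleftrightarrow> (\<exists>ys. (bypass_step C)\<^sup>*\<^sup>* xs ys \<and> length ys - 1 \<le> l)"

definition comb_diameter :: "'n set \<Rightarrow> 'n \<Rightarrow> ('n \<Rightarrow> 'n) \<Rightarrow> ('n \<Rightarrow> 'a set) \<Rightarrow> nat" where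
  "comb_diameter N r p C =
     (LEAST \<delta>. \<forall>x\<in>N. \<forall>y\<in>N. \<forall>xs. is_tpath N r p xs x y \<longrightarrow> comb_length_le C xs \<delta>)"

definition layer :: "nat \<Rightarrow> (nat \<Rightarrow> nat) \<Rightarrow> 'n \<Rightarrow> ('n \<Rightarrow> 'n) \<Rightarrow> 'n \<Rightarrow> int" where
  "layer q m r p v = Max ({-1} \<union> {int j | j. j < q \<and> level r p v mod m j = 0})"

definition new_bags :: "nat \<Rightarrow> (nat \<Rightarrow> nat) \<Rightarrow> 'n set \<Rightarrow> 'n \<Rightarrow> ('n \<Rightarrow> 'n) \<Rightarrow> ('n \<Rightarrow> 'a set) \<Rightarrow> 'n \<Rightarrow> 'a set" where
  "new_bags q m N r p B v =
     (if v = r then B r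
      else B v \<union> \<Union>{B w | w. w \<in> tpath_set N r p (p v) r \<and>
                 layer q m r p w = Max (layer q m r p ` tpath_set N r p (p v) w)})"

end

theory Submission
  imports Defs
begin


fun chn :: "('n \<Rightarrow> 'n) \<Rightarrow> 'n \<Rightarrow> nat \<Rightarrow> 'n list" where
  "chn p v 0 = [v]"
| "chn p v (Suc n) = v # chn p (p v) n"

lemma fp: "(p^^a) ((p^^b) v) = (p^^(a+b)) v"
  by (simp add: funpow_add)

lemma chn_len[simp]: "length (chn p v n) = Suc n"
  by (induction n arbitrary: v) auto

lemma chn_ne[simp]: "chn p v n \<noteq> []"
  by (cases n) auto

lemma chn_nth: "i \<le> n \<Longrightarrow> chn p v n ! i = (p^^i) v"
proof (induction n arbitrary: v i)
  case 0 then show ?case by simp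
next
  case (Suc n)
  then show ?case by (cases i) (auto simp: funpow_swap1)
qed

lemma chn_hd[simp]: "hd (chn p v n) = v"
  by (cases n) auto

lemma chn_last[simp]: "last (chn p v n) = (p^^n) v"
  by (induction n arbitrary: v) (auto simp: funpow_swap1)

lemma chn_snoc: "chn p v (Suc n) = chn p v n @ [(p^^Suc n) v]"
  by (induction n arbitrary: v) (auto simp: funpow_Suc_right simp del: funpow.simps)

lemma chn_split: "chn p v (k + j) = butlast (chn p v k) @ chn p ((p^^k) v) j"
proof (induction k arbitrary: v)
  case 0 then show ?case by simp
next
  case (Suc k)
  then show ?case by (simp add: funpow_Suc_right del: funpow.simps)
qed

lemma chn_set: "set (chn p v n) = {(p^^i) v | i. i \<le> n}"
proof -
  have "set (chn p v n) = {chn p v n ! i | i. i < Suc n}"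
    by (simp add: set_conv_nth)
  also have "\<dots> = {(p^^i) v | i. i \<le> n}"
    by (metis (no_types, lifting) chn_nth less_Suc_eq_le)
  finally show ?thesis .
qed

locale TDL =
  fixes V :: "'a set" and E :: "'a \<Rightarrow> 'a \<Rightarrow> bool"
    and N :: "'n set" and r :: 'n and p :: "'n \<Rightarrow> 'n" and B :: "'n \<Rightarrow> 'a set"
    and q :: nat and m :: "nat \<Rightarrow> nat"
  assumes rt: "rooted_tree N r p" and td: "tree_decomposition V E N r p B"
begin

abbreviation "lv \<equiv> level r p"
abbreviation "lam \<equiv> layer q m r p"
abbreviation "C \<equiv> new_bags q m N r p B"

lemma lv_root: "v \<in> N \<Longrightarrow> (p^^lv v) v = r"
  using rt unfolding rooted_tree_def level_def by (metis (mono_tags, lifting) LeastI_ex)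

lemma lv_le: "(p^^i) v = r \<Longrightarrow> lv v \<le> i"
  unfolding level_def by (rule Least_le)

lemma lv_r[simp]: "lv r = 0"
  using lv_le[of 0 r] by simp

lemma lv0: "v \<in> N \<Longrightarrow> lv v = 0 \<Longrightarrow> v = r"
  using lv_root by fastforce

lemma par: assumes "v \<in> N" "v \<noteq> r" shows "p v \<in> N \<and> lv (p v) = lv v - 1"
proof
  show "p v \<in> N" using rt assms unfolding rooted_tree_def by auto
  have pos: "lv v \<ge> 1" using lv0 assms by (cases "lv v") auto
  have a: "(p^^(lv v - 1)) (p v) = r"
    using lv_root[OF assms(1)] pos by (metis Suc_diff_le diff_Suc_1 funpow_Suc_right o_apply)
  have "lv (p v) \<le> lv v - 1" using lv_le[OF a] .
  moreover have "lv v \<le> Suc (lv (p v))"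
  proof -
    have "(p^^lv (p v)) (p v) = r" using lv_root \<open>p v \<in> N\<close> by blast
    then have "(p^^Suc (lv (p v))) v = r" by (simp add: funpow_Suc_right del: funpow.simps)
    then show ?thesis by (rule lv_le)
  qed
  ultimately show "lv (p v) = lv v - 1" by linarith
qed

lemma iter: "v \<in> N \<Longrightarrow> i \<le> lv v \<Longrightarrow> (p^^i) v \<in> N \<and> lv ((p^^i) v) = lv v - i"
proof (induction i)
  case 0 then show ?case by simp
next
  case (Suc i)
  then have u: "(p^^i) v \<in> N" "lv ((p^^i) v) = lv v - i" by auto
  have "lv ((p^^i) v) \<noteq> 0" using u Suc.prems by auto
  then have "(p^^i) v \<noteq> r" by (metis lv_r)
  then show ?case using par[OF u(1)] u(2) by auto
qed

lemma iter_ne: "v \<in> N \<Longrightarrow> i < lv v \<Longrightarrow> (p^^i) v \<noteq> r"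
  using iter[of v i] lv_r by (metis less_imp_le_nat zero_less_diff less_numeral_extra(3))

lemma iter_inj: "v \<in> N \<Longrightarrow> i \<le> lv v \<Longrightarrow> j \<le> lv v \<Longrightarrow> (p^^i) v = (p^^j) v \<Longrightarrow> i = j"
  using iter[of v i] iter[of v j] by auto

lemma chn_tpath: assumes "v \<in> N" "n \<le> lv v"
  shows "is_tpath N r p (chn p v n) v ((p^^n) v)"
  unfolding is_tpath_def
proof (intro conjI allI impI)
  show "distinct (chn p v n)"
    unfolding distinct_conv_nth using assms iter_inj by (auto simp: chn_nth)
  show "set (chn p v n) \<subseteq> N" using assms iter by (auto simp: chn_set)
  fix i assume "Suc i < length (chn p v n)"
  then have i: "i < n" by simp
  then show "tadj N r p (chn p v n ! i) (chn p v n ! Suc i)"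
    using assms iter[of v i] iter[of v "Suc i"] iter_ne[of v i]
    unfolding tadj_def by (auto simp: chn_nth)
qed auto

lemma RI: assumes "u \<in> N" "i \<le> l" "l \<le> j" "j \<le> lv u"
  "e \<in> B ((p^^i) u)" "e \<in> B ((p^^j) u)"
  shows "e \<in> B ((p^^l) u)"
proof -
  have si: "(p^^i) u \<in> N" "lv ((p^^i) u) = lv u - i" using iter assms by auto
  have sj: "(p^^j) u \<in> N" using iter assms by auto
  have eV: "e \<in> V" using td si(1) assms(5) unfolding tree_decomposition_def by blast
  have tp: "is_tpath N r p (chn p ((p^^i) u) (j-i)) ((p^^i) u) ((p^^j) u)"
    using chn_tpath[OF si(1), of "j-i"] si(2) assms by (simp add: fp)
  have "(p^^l) u \<in> set (chn p ((p^^i) u) (j-i))"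
    unfolding chn_set using assms by (auto simp: fp intro!: exI[of _ "l-i"])
  then have "(p^^l) u \<in> tpath_set N r p ((p^^i) u) ((p^^j) u)"
    unfolding tpath_set_def using tp by blast
  then show ?thesis using td eV si(1) sj assms(5,6) unfolding tree_decomposition_def by blast
qed

lemma UD: "distinct xs \<Longrightarrow> xs \<noteq> [] \<Longrightarrow> (\<forall>i. Suc i < length xs \<longrightarrow> tadj N r p (xs!i) (xs!Suc i)) \<Longrightarrow>
  \<exists>a b. take (Suc a) xs = chn p (hd xs) a \<and> drop a xs = rev (chn p (last xs) b) \<and>
     (\<forall>i<a. (p^^i) (hd xs) \<noteq> r) \<and> (\<forall>i<b. (p^^i) (last xs) \<noteq> r)"
proof (induction xs)
  case Nil then show ?case by simp
next
  case (Cons x xs)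
  show ?case
  proof (cases xs)
    case Nil then show ?thesis by (auto intro!: exI[of _ 0])
  next
    case (Cons x2 rest)
    have tl: "\<forall>i. Suc i < length xs \<longrightarrow> tadj N r p (xs!i) (xs!Suc i)"
      using Cons.prems(3) by auto
    have dx: "distinct xs" "xs \<noteq> []" using Cons.prems(1) \<open>xs = x2 # rest\<close> by auto
    have hx: "hd xs = x2" using \<open>xs = x2 # rest\<close> by simp
    obtain a b where ab0: "take (Suc a) xs = chn p (hd xs) a" "drop a xs = rev (chn p (last xs) b)"
      "\<forall>i<a. (p^^i) (hd xs) \<noteq> r" "\<forall>i<b. (p^^i) (last xs) \<noteq> r"
      using Cons.IH[OF dx tl] by blast
    have ab: "take (Suc a) xs = chn p x2 a" "drop a xs = rev (chn p (last xs) b)"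
      "\<forall>i<a. (p^^i) x2 \<noteq> r" "\<forall>i<b. (p^^i) (last xs) \<noteq> r"
      using ab0 unfolding hx by auto
    have ta: "tadj N r p x x2" using Cons.prems(3) \<open>xs = x2 # rest\<close> by fastforce
    have lst: "last (x # xs) = last xs" using \<open>xs = x2 # rest\<close> by simp
    show ?thesis
    proof (cases "x \<noteq> r \<and> p x = x2")
      case True
      have "take (Suc (Suc a)) (x # xs) = chn p x (Suc a)" using ab(1) True by simp
      moreover have "drop (Suc a) (x # xs) = rev (chn p (last (x#xs)) b)" using ab(2) lst by simp
      moreover have "\<forall>i<Suc a. (p^^i) x \<noteq> r"
      proof (intro allI impI)
        fix i assume "i < Suc a"
        then show "(p^^i) x \<noteq> r"
        proof (cases i)
          case (Suc j) then show ?thesis using True ab(3) \<open>i < Suc a\<close>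
            by (simp only: funpow_Suc_right o_apply) simp
        qed (use True in simp)
      qed
      ultimately have "take (Suc (Suc a)) (x # xs) = chn p (hd (x#xs)) (Suc a) \<and> drop (Suc a) (x # xs) = rev (chn p (last (x#xs)) b) \<and>
     (\<forall>i<Suc a. (p^^i) (hd (x#xs)) \<noteq> r) \<and> (\<forall>i<b. (p^^i) (last (x#xs)) \<noteq> r)"
        using ab(4) lst by simp
      then show ?thesis by blast
    next
      case False
      then have d: "x2 \<noteq> r" "p x2 = x" using ta unfolding tadj_def by auto
      have a0: "a = 0"
      proof (rule ccontr)
        assume "a \<noteq> 0"
        then obtain a' where "a = Suc a'" by (cases a) auto
        then have "take (Suc a') rest = chn p (p x2) a'" using ab(1) \<open>xs = x2 # rest\<close> d by simp
        then have "rest \<noteq> [] \<and> hd rest = x" using d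
        proof (cases rest)
          case Nil then show ?thesis using \<open>take (Suc a') rest = chn p (p x2) a'\<close> by (metis chn_ne take_Nil)
        next
          case (Cons c cs)
          then have "hd (take (Suc a') rest) = c" by simp
          then have "c = hd (chn p (p x2) a')" using \<open>take (Suc a') rest = chn p (p x2) a'\<close> by simp
          then show ?thesis using Cons d by simp
        qed
        then show False using Cons.prems(1) \<open>xs = x2 # rest\<close> by (cases rest) auto
      qed
      have xs: "xs = rev (chn p (last xs) b)" using ab(2) a0 by simp
      have "last (chn p (last xs) b) = x2"
        using xs \<open>xs = x2 # rest\<close> by (metis hd_rev list.sel(1))
      then have lb: "(p^^b) (last xs) = x2" by simp
      have "chn p (last xs) (Suc b) = chn p (last xs) b @ [x]"
        by (simp only: chn_snoc funpow.simps(2) o_apply lb d)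
      then have e: "x # xs = rev (chn p (last xs) (Suc b))" using xs by (metis rev.simps(2) rev_rev_ident)
      have e3: "\<forall>i<Suc b. (p^^i) (last xs) \<noteq> r"
        using ab(4) lb d by (auto simp: less_Suc_eq)
      have e1: "take (Suc 0) (x#xs) = chn p (hd (x#xs)) 0" by simp
      have e2: "drop 0 (x#xs) = rev (chn p (last (x#xs)) (Suc b))"
        unfolding drop_0 lst by (rule e)
      have e4: "\<forall>i<Suc b. (p^^i) (last (x#xs)) \<noteq> r" unfolding lst by (rule e3)
      have e5: "\<forall>i<(0::nat). (p^^i) (hd (x#xs)) \<noteq> r" by simp
      show ?thesis using e1 e2 e4 e5 by blast
    qed
  qed
qed

lemma tpath_struct: assumes "is_tpath N r p xs x y" "x \<in> N" "y \<in> N"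
  shows "\<exists>a b. take (Suc a) xs = chn p x a \<and> drop a xs = rev (chn p y b) \<and> a \<le> lv x \<and> b \<le> lv y
     \<and> length xs = a + Suc b"
proof -
  have h: "distinct xs" "xs \<noteq> []" "\<forall>i. Suc i < length xs \<longrightarrow> tadj N r p (xs!i) (xs!Suc i)"
    "hd xs = x" "last xs = y" using assms(1) unfolding is_tpath_def by auto
  obtain a b where ab: "take (Suc a) xs = chn p x a" "drop a xs = rev (chn p y b)"
    "\<forall>i<a. (p^^i) x \<noteq> r" "\<forall>i<b. (p^^i) y \<noteq> r"
    using UD[OF h(1-3)] h(4,5) by auto
  have "a \<le> lv x"
  proof (rule ccontr)
    assume "\<not> a \<le> lv x"
    then have "(p^^lv x) x \<noteq> r" using ab(3) by simp
    then show False using lv_root assms(2) by simp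
  qed
  moreover have "b \<le> lv y"
  proof (rule ccontr)
    assume "\<not> b \<le> lv y"
    then have "(p^^lv y) y \<noteq> r" using ab(4) by simp
    then show False using lv_root assms(3) by simp
  qed
  moreover have "length xs = a + Suc b"
  proof -
    have "length (drop a xs) = Suc b" using ab(2) by simp
    moreover have "length (take (Suc a) xs) = Suc a" using ab(1) by simp
    ultimately show ?thesis by simp
  qed
  ultimately show ?thesis using ab(1,2) by blast
qed

lemma TP: assumes "u \<in> N" "j \<le> lv u"
  shows "tpath_set N r p u ((p^^j) u) = {(p^^l) u | l. l \<le> j}"
proof
  show "{(p^^l) u | l. l \<le> j} \<subseteq> tpath_set N r p u ((p^^j) u)"
    using chn_tpath[OF assms] unfolding tpath_set_def chn_set[symmetric] by blast
next
  show "tpath_set N r p u ((p^^j) u) \<subseteq> {(p^^l) u | l. l \<le> j}"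
  proof
    fix z assume "z \<in> tpath_set N r p u ((p^^j) u)"
    then obtain xs where xs: "is_tpath N r p xs u ((p^^j) u)" "z \<in> set xs"
      unfolding tpath_set_def by blast
    let ?w = "(p^^j) u"
    have wN: "?w \<in> N" "lv ?w = lv u - j" using iter assms by auto
    obtain a b where ab: "take (Suc a) xs = chn p u a" "drop a xs = rev (chn p ?w b)"
      "a \<le> lv u" "b \<le> lv ?w" "length xs = a + Suc b"
      using tpath_struct[OF xs(1) assms(1) wN(1)] by blast
    have d: "distinct xs" "last xs = ?w" using xs(1) unfolding is_tpath_def by auto
    have pa: "xs ! a = (p^^a) u"
      using arg_cong[OF ab(1), of "\<lambda>l. l ! a"] chn_nth[of a a p u] by simp
    have pb: "xs ! a = (p^^b) ?w"
    proof -
      have "xs ! a = drop a xs ! 0" using ab(5) by simp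
      also have "\<dots> = rev (chn p ?w b) ! 0" using ab(2) by simp
      also have "\<dots> = (p^^b) ?w" by (simp add: rev_nth chn_nth)
      finally show ?thesis .
    qed
    have b0: "b = 0"
    proof (rule ccontr)
      assume "b \<noteq> 0"
      have "(p^^a) u = (p^^(b+j)) u" using pa pb by (simp add: fp)
      then have aj: "a = b + j" using iter_inj[OF assms(1) ab(3)] ab(4) wN(2) assms(2) by simp
      have "xs ! j = (p^^j) u"
        using arg_cong[OF ab(1), of "\<lambda>l. l ! j"] chn_nth[of j a p u] aj by simp
      moreover have "xs ! (a + b) = ?w"
      proof -
        have "xs \<noteq> []" using ab(5) by auto
        then have "last xs = xs ! (length xs - 1)" by (rule last_conv_nth)
        then show ?thesis using d(2) ab(5) by simp
      qed
      ultimately have "xs ! j = xs ! (a + b)" by simp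
      moreover have "j < length xs" "a + b < length xs" using ab(5) aj by auto
      ultimately have "j = a + b" using nth_eq_iff_index_eq[OF d(1)] by blast
      then show False using aj \<open>b \<noteq> 0\<close> by simp
    qed
    have "xs = chn p u a" using ab(1,5) b0 by simp
    then have "(p^^a) u = ?w" using d(2) by simp
    then have "a = j" using iter_inj[OF assms(1) ab(3) assms(2)] by simp
    then show "z \<in> {(p^^l) u | l. l \<le> j}" using xs(2) \<open>xs = chn p u a\<close> by (simp add: chn_set)
  qed
qed



definition isrec :: "'n \<Rightarrow> nat \<Rightarrow> bool" where
  "isrec v i \<longleftrightarrow> 1 \<le> i \<and> i \<le> lv v \<and> (\<forall>l. 1 \<le> l \<and> l \<le> i \<longrightarrow> lam ((p^^l) v) \<le> lam ((p^^i) v))"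

lemma pS: "(p^^l) (p v) = (p^^Suc l) v"
  by (simp add: funpow_Suc_right del: funpow.simps)

lemma NB: assumes "v \<in> N" "v \<noteq> r"
  shows "C v = B v \<union> \<Union> (B ` ((\<lambda>i. (p^^i) v) ` {i. isrec v i}))"
proof -
  let ?u = "p v"
  have u: "?u \<in> N" "lv ?u = lv v - 1" using par assms by auto
  have lvpos: "lv v \<ge> 1" using assms lv0 by (cases "lv v") auto
  have ru: "(p^^lv ?u) ?u = r" using lv_root u(1) by blast
  have T1: "tpath_set N r p ?u r = {(p^^l) ?u | l. l \<le> lv ?u}"
    using TP[OF u(1) order_refl] ru by simp
  have key: "(lam ((p^^l) ?u) = Max (lam ` tpath_set N r p ?u ((p^^l) ?u))) \<longleftrightarrow> isrec v (Suc l)"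
    if l: "l \<le> lv ?u" for l
  proof -
    have T2: "tpath_set N r p ?u ((p^^l) ?u) = (\<lambda>l'. (p^^l') ?u) ` {..l}"
      using TP[OF u(1) l] by auto
    have fin: "finite (lam ` tpath_set N r p ?u ((p^^l) ?u))" unfolding T2 by simp
    have mem: "lam ((p^^l) ?u) \<in> lam ` tpath_set N r p ?u ((p^^l) ?u)" unfolding T2 by auto
    have "(lam ((p^^l) ?u) = Max (lam ` tpath_set N r p ?u ((p^^l) ?u))) \<longleftrightarrow>
          (\<forall>l'\<le>l. lam ((p^^l') ?u) \<le> lam ((p^^l) ?u))"
    proof
      assume "lam ((p^^l) ?u) = Max (lam ` tpath_set N r p ?u ((p^^l) ?u))"
      then show "\<forall>l'\<le>l. lam ((p^^l') ?u) \<le> lam ((p^^l) ?u)"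
        using Max_ge[OF fin] unfolding T2 by auto
    next
      assume h: "\<forall>l'\<le>l. lam ((p^^l') ?u) \<le> lam ((p^^l) ?u)"
      have "Max (lam ` tpath_set N r p ?u ((p^^l) ?u)) = lam ((p^^l) ?u)"
        by (rule Max_eqI[OF fin _ mem]) (use h in \<open>auto simp: T2\<close>)
      then show "lam ((p^^l) ?u) = Max (lam ` tpath_set N r p ?u ((p^^l) ?u))" by simp
    qed
    also have "\<dots> \<longleftrightarrow> isrec v (Suc l)"
    proof
      assume h: "\<forall>l'\<le>l. lam ((p^^l') ?u) \<le> lam ((p^^l) ?u)"
      show "isrec v (Suc l)" unfolding isrec_def
      proof (intro conjI allI impI)
        show "Suc l \<le> lv v" using l u(2) lvpos by simp
        fix l' assume "1 \<le> l' \<and> l' \<le> Suc l"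
        then obtain l'' where "l' = Suc l''" "l'' \<le> l" by (cases l') auto
        then show "lam ((p^^l') v) \<le> lam ((p^^Suc l) v)" using h by (simp only: pS[symmetric])
      qed simp
    next
      assume h: "isrec v (Suc l)"
      show "\<forall>l'\<le>l. lam ((p^^l') ?u) \<le> lam ((p^^l) ?u)"
        using h unfolding isrec_def pS by auto
    qed
    finally show ?thesis .
  qed
  have "{w. w \<in> tpath_set N r p ?u r \<and> lam w = Max (lam ` tpath_set N r p ?u w)} =
        (\<lambda>i. (p^^i) v) ` {i. isrec v i}"
  proof
    show "{w. w \<in> tpath_set N r p ?u r \<and> lam w = Max (lam ` tpath_set N r p ?u w)} \<subseteq>
        (\<lambda>i. (p^^i) v) ` {i. isrec v i}"
    proof
      fix w assume "w \<in> {w. w \<in> tpath_set N r p ?u r \<and> lam w = Max (lam ` tpath_set N r p ?u w)}"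
      then obtain l where "l \<le> lv ?u" "w = (p^^l) ?u" "lam w = Max (lam ` tpath_set N r p ?u w)"
        unfolding T1 by auto
      then have "isrec v (Suc l)" "w = (p^^Suc l) v" using key pS by auto
      then show "w \<in> (\<lambda>i. (p^^i) v) ` {i. isrec v i}" by blast
    qed
  next
    show "(\<lambda>i. (p^^i) v) ` {i. isrec v i} \<subseteq>
       {w. w \<in> tpath_set N r p ?u r \<and> lam w = Max (lam ` tpath_set N r p ?u w)}"
    proof
      fix w assume "w \<in> (\<lambda>i. (p^^i) v) ` {i. isrec v i}"
      then obtain i where i: "isrec v i" "w = (p^^i) v" by auto
      then obtain l where l: "i = Suc l" unfolding isrec_def by (cases i) auto
      then have "l \<le> lv ?u" using i u(2) unfolding isrec_def by auto
      then show "w \<in> {w. w \<in> tpath_set N r p ?u r \<and> lam w = Max (lam ` tpath_set N r p ?u w)}"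
      proof -
        have "w = (p^^l) ?u" using i l pS[of l v] by simp
        moreover have "lam ((p^^l) ?u) = Max (lam ` tpath_set N r p ?u ((p^^l) ?u))"
          using key[OF \<open>l \<le> lv ?u\<close>] i l by simp
        ultimately show ?thesis unfolding T1 using \<open>l \<le> lv ?u\<close> by blast
      qed
    qed
  qed
  moreover have "C v = B v \<union> \<Union> (B ` {w. w \<in> tpath_set N r p ?u r \<and> lam w = Max (lam ` tpath_set N r p ?u w)})"
    unfolding new_bags_def using assms(2) by (auto simp: image_def)
  ultimately show ?thesis by simp
qed

lemma NBr: "C r = B r"
  unfolding new_bags_def by simp


lemma isrec_pos: "isrec a i \<Longrightarrow> 1 \<le> i \<and> i \<le> lv a"
  unfolding isrec_def by auto

lemma isrec_ner: "a \<in> N \<Longrightarrow> isrec a i \<Longrightarrow> a \<noteq> r"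
  using isrec_pos by fastforce

lemma recB: "a \<in> N \<Longrightarrow> isrec a j \<Longrightarrow> B ((p^^j) a) \<subseteq> C a"
  using NB[of a] isrec_ner by auto

lemma rec_ext: assumes "isrec a i" "1 \<le> k" "i + k \<le> lv a"
  "lam ((p^^i) a) \<le> lam ((p^^k) ((p^^i) a))"
  "\<forall>k'. 1 \<le> k' \<and> k' < k \<longrightarrow> lam ((p^^k') ((p^^i) a)) \<le> lam ((p^^k) ((p^^i) a))"
  shows "isrec a (k + i)"
  unfolding isrec_def
proof (intro conjI allI impI)
  show "1 \<le> k + i" "k + i \<le> lv a" using assms by auto
  fix l assume l: "1 \<le> l \<and> l \<le> k + i"
  show "lam ((p^^l) a) \<le> lam ((p^^(k+i)) a)"
  proof (cases "l \<le> i")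
    case True
    then have "lam ((p^^l) a) \<le> lam ((p^^i) a)" using assms(1) l unfolding isrec_def by auto
    then show ?thesis using assms(4) by (simp add: fp)
  next
    case False
    then have "(p^^l) a = (p^^(l-i)) ((p^^i) a)" by (simp add: fp)
    moreover have "lam ((p^^(l-i)) ((p^^i) a)) \<le> lam ((p^^k) ((p^^i) a))"
    proof (cases "l - i < k")
      case True
      then show ?thesis using assms(5) False by auto
    next
      case False
      then have "l - i = k" using l by auto
      then show ?thesis by simp
    qed
    ultimately show ?thesis by (simp add: fp)
  qed
qed

lemma G: assumes aN: "a \<in> N" and ri: "isrec a i" and zdef: "z = (p^^i) a" and ez: "e \<in> C z"
  and alt: "(\<exists>k k0. 1 \<le> k0 \<and> k0 \<le> k \<and> k \<le> lv z \<and> lam ((p^^k0) z) \<ge> lam z \<and> e \<in> B ((p^^k) z))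
          \<or> (\<exists>t k. t \<in> N \<and> k \<le> lv t \<and> (p^^k) t = z \<and> e \<in> B t)"
  shows "e \<in> C a"
proof -
  have ip: "1 \<le> i" "i \<le> lv a" using isrec_pos[OF ri] by auto
  have zN: "z \<in> N" "lv z = lv a - i" using iter[OF aN ip(2)] zdef by auto
  have Bz: "B z \<subseteq> C a" using recB[OF aN ri] zdef by simp
  show ?thesis
  proof (cases "z = r")
    case True
    then show ?thesis using ez NBr Bz by auto
  next
    case False
    show ?thesis
    proof (cases "e \<in> B z")
      case True then show ?thesis using Bz by auto
    next
      case False
      with ez NB[OF zN(1) \<open>z \<noteq> r\<close>] obtain mm where mm: "isrec z mm" "e \<in> B ((p^^mm) z)" by auto
      have mmp: "1 \<le> mm" "mm \<le> lv z" using isrec_pos[OF mm(1)] by auto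
      show ?thesis
      proof (cases "lam z \<le> lam ((p^^mm) z)")
        case True
        have "isrec a (mm + i)"
          by (rule rec_ext[OF ri mmp(1)]) (use mmp zN True mm(1) zdef in \<open>auto simp: isrec_def\<close>)
        then have "B ((p^^(mm+i)) a) \<subseteq> C a" by (rule recB[OF aN])
        then show ?thesis using mm(2) zdef by (auto simp: fp)
      next
        case lt: False
        have below: "lam ((p^^l) z) < lam z" if "1 \<le> l" "l \<le> mm" for l
          using mm(1) that lt unfolding isrec_def by force
        from alt show ?thesis
        proof
          assume "\<exists>k k0. 1 \<le> k0 \<and> k0 \<le> k \<and> k \<le> lv z \<and> lam ((p^^k0) z) \<ge> lam z \<and> e \<in> B ((p^^k) z)"
          then obtain k k0 where kk: "1 \<le> k0" "k0 \<le> k" "k \<le> lv z" "lam ((p^^k0) z) \<ge> lam z" "e \<in> B ((p^^k) z)"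
            by blast
          define k1 where "k1 = (LEAST k0. 1 \<le> k0 \<and> lam ((p^^k0) z) \<ge> lam z)"
          have k1: "1 \<le> k1" "lam ((p^^k1) z) \<ge> lam z"
            using LeastI[of "\<lambda>k0. 1 \<le> k0 \<and> lam ((p^^k0) z) \<ge> lam z", OF conjI[OF kk(1) kk(4)]]
            unfolding k1_def by auto
          have k1le: "k1 \<le> k0" unfolding k1_def using kk(1,4) by (simp add: Least_le)
          have k1min: "lam ((p^^k') z) < lam z" if "1 \<le> k'" "k' < k1" for k'
            using not_less_Least[of k' "\<lambda>k0. 1 \<le> k0 \<and> lam ((p^^k0) z) \<ge> lam z"] that
            unfolding k1_def[symmetric] by auto
          have "mm < k1"
          proof (rule ccontr)
            assume "\<not> mm < k1"
            then show False using below[OF k1(1)] k1(2) by simp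
          qed
          then have eB: "e \<in> B ((p^^k1) z)"
            using RI[OF zN(1), of mm k1 k e] mm(2) kk k1le by simp
          have "isrec a (k1 + i)"
            by (rule rec_ext[OF ri k1(1)]) (use kk k1le zN zdef k1 k1min ip in \<open>force+\<close>)
          then have "B ((p^^(k1+i)) a) \<subseteq> C a" by (rule recB[OF aN])
          then show ?thesis using eB zdef by (auto simp: fp)
        next
          assume "\<exists>t k. t \<in> N \<and> k \<le> lv t \<and> (p^^k) t = z \<and> e \<in> B t"
          then obtain t k where tk: "t \<in> N" "k \<le> lv t" "(p^^k) t = z" "e \<in> B t" by blast
          have "lv z = lv t - k" using iter[OF tk(1,2)] tk(3) by simp
          then have le: "mm + k \<le> lv t" using mmp tk(2) by simp
          have "(p^^(mm+k)) t = (p^^mm) z" unfolding tk(3)[symmetric] by (simp add: fp)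
          then have "e \<in> B ((p^^(mm+k)) t)" using mm(2) by simp
          then have "e \<in> B ((p^^k) t)" using RI[OF tk(1), of 0 k "mm+k" e] tk(4) le by simp
          then show ?thesis using tk(3) Bz by auto
        qed
      qed
    qed
  qed
qed


end


abbreviation "red C \<equiv> (bypass_step C)\<^sup>*\<^sup>*"

lemma step_ctx: "bypass_step C xs ys \<Longrightarrow> bypass_step C (P @ xs @ S) (P @ ys @ S)"
proof (induction rule: bypass_step.induct)
  case (1 v b a as bs)
  have "bypass_step C ((P @ as) @ [a, v, b] @ (bs @ S)) ((P @ as) @ [a, b] @ (bs @ S))"
    using 1 by (rule bypass_step.intros)
  then show ?case by simp
qed

lemma red_ctx: "red C xs ys \<Longrightarrow> red C (P @ xs @ S) (P @ ys @ S)"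
proof (induction rule: rtranclp_induct)
  case base then show ?case by simp
next
  case (step y z)
  then show ?case using step_ctx[of C y z P S] by (meson rtranclp.rtrancl_into_rtrancl)
qed

lemma step_rev: "bypass_step C xs ys \<Longrightarrow> bypass_step C (rev xs) (rev ys)"
proof (induction rule: bypass_step.induct)
  case (1 v b a as bs)
  have "bypass_step C (rev bs @ [b, v, a] @ rev as) (rev bs @ [b, a] @ rev as)"
    using 1 by (intro bypass_step.intros) blast
  then show ?case by simp
qed

lemma red_rev: "red C xs ys \<Longrightarrow> red C (rev xs) (rev ys)"
proof (induction rule: rtranclp_induct)
  case base then show ?case by simp
next
  case (step y z)
  then show ?case using step_rev[of C y z] by (meson rtranclp.rtrancl_into_rtrancl)
qed

lemma red3: "C v \<inter> C b \<subseteq> C a \<Longrightarrow> red C (P @ [a, v, b] @ S) (P @ [a, b] @ S)"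
  by (intro r_into_rtranclp bypass_step.intros) blast

context TDL begin

lemma CW: assumes "w \<in> N" "e \<in> C w"
  shows "\<exists>k. k \<le> lv w \<and> e \<in> B ((p^^k) w) \<and> (k = 0 \<or> isrec w k)"
proof (cases "w = r")
  case True then show ?thesis using assms NBr by (intro exI[of _ 0]) auto
next
  case False
  then show ?thesis using NB[OF assms(1) False] assms(2) isrec_pos by fastforce
qed

lemma lam_bounds: "-1 \<le> lam v \<and> lam v \<le> int q - 1"
proof -
  let ?S = "{-1} \<union> {int j | j. j < q \<and> level r p v mod m j = 0}"
  have fin: "finite ?S" by simp
  have "-1 \<le> Max ?S" using Max_ge[OF fin] by simp
  moreover have "Max ?S \<le> int q - 1" using fin by (subst Max_le_iff) auto
  ultimately show ?thesis unfolding layer_def by simp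
qed

lemma bypass_rec: assumes vN: "v \<in> N" and rk: "isrec v k" and rn: "isrec v n" and kn: "k < n"
  shows "C ((p^^k) v) \<inter> C ((p^^n) v) \<subseteq> C v"
proof
  fix e assume e: "e \<in> C ((p^^k) v) \<inter> C ((p^^n) v)"
  let ?s = "(p^^k) v" and ?w = "(p^^n) v"
  have np: "1 \<le> k" "n \<le> lv v" using isrec_pos rk rn by auto
  have sN: "?s \<in> N" "lv ?s = lv v - k" using iter vN np kn by auto
  have wN: "?w \<in> N" "lv ?w = lv v - n" using iter vN np by auto
  obtain k' where k': "k' \<le> lv ?w" "e \<in> B ((p^^k') ?w)" using CW[OF wN(1)] e by blast
  have eq: "(p^^k') ?w = (p^^(k' + (n-k))) ?s" using kn by (simp add: fp)
  have eq2: "(p^^(n-k)) ?s = ?w" using kn by (simp add: fp)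
  have "lam ?s \<le> lam ?w" using rn np kn unfolding isrec_def by auto
  then have alt: "\<exists>kk k0. 1 \<le> k0 \<and> k0 \<le> kk \<and> kk \<le> lv ?s \<and> lam ((p^^k0) ?s) \<ge> lam ?s \<and> e \<in> B ((p^^kk) ?s)"
    using k' eq eq2 sN wN kn np by (intro exI[of _ "k' + (n-k)"] exI[of _ "n-k"]) auto
  show "e \<in> C v" by (rule G[OF vN rk refl]) (use e alt in auto)
qed

lemma P: "\<forall>v. v \<in> N \<longrightarrow> isrec v n \<longrightarrow> red C (chn p v n) [v, (p^^n) v]"
proof (induction n rule: less_induct)
  case (less n)
  show ?case
  proof (intro allI impI)
    fix v assume vN: "v \<in> N" and rn: "isrec v n"
    have np: "1 \<le> n" "n \<le> lv v" using isrec_pos[OF rn] by auto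
    show "red C (chn p v n) [v, (p^^n) v]"
    proof (cases "n = 1")
      case True then show ?thesis by simp
    next
      case False
      let ?f = "\<lambda>l. lam ((p^^l) v)"
      define S where "S = {1..n-1}"
      define M where "M = Max (?f ` S)"
      define k where "k = Max {l\<in>S. ?f l = M}"
      have finS: "finite S" "S \<noteq> {}" using False np unfolding S_def by auto
      have Mm: "M \<in> ?f ` S" unfolding M_def using finS by simp
      have Mge: "\<forall>l\<in>S. ?f l \<le> M" unfolding M_def using finS by simp
      have finK: "finite {l\<in>S. ?f l = M}" "{l\<in>S. ?f l = M} \<noteq> {}" using finS Mm by auto
      have kK: "k \<in> S" "?f k = M" using Max_in[OF finK] unfolding k_def by auto
      have kk: "1 \<le> k" "k < n" using kK(1) np unfolding S_def by auto
      have rk: "isrec v k" unfolding isrec_def using kk np Mge kK unfolding S_def by auto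
      define s where "s = (p^^k) v"
      have sN: "s \<in> N" "lv s = lv v - k" using iter vN kk np unfolding s_def by auto
      have rs: "isrec s (n-k)" unfolding isrec_def
      proof (intro conjI allI impI)
        show "1 \<le> n - k" "n - k \<le> lv s" using kk np sN by auto
        fix l assume "1 \<le> l \<and> l \<le> n - k"
        then have "lam ((p^^(l+k)) v) \<le> lam ((p^^n) v)" using rn kk unfolding isrec_def by auto
        then show "lam ((p^^l) s) \<le> lam ((p^^(n-k)) s)" unfolding s_def using kk by (simp add: fp)
      qed
      have w: "(p^^(n-k)) s = (p^^n) v" unfolding s_def using kk by (simp add: fp)
      have IH1: "red C (chn p v k) [v, s]" using less.IH[OF kk(2)] vN rk unfolding s_def by blast
      have IH2: "red C (chn p s (n-k)) [s, (p^^n) v]"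
        using less.IH[of "n-k"] kk sN rs w by auto
      have split: "chn p v n = butlast (chn p v k) @ chn p s (n-k) @ []"
        using chn_split[of p v k "n-k"] kk unfolding s_def by simp
      have r1: "red C (chn p v n) (butlast (chn p v k) @ [s, (p^^n) v] @ [])"
        unfolding split by (rule red_ctx[OF IH2])
      have eq: "butlast (chn p v k) @ [s, (p^^n) v] @ [] = [] @ chn p v k @ [(p^^n) v]"
      proof -
        have "chn p v k = butlast (chn p v k) @ [s]"
          using append_butlast_last_id[OF chn_ne[of p v k]] unfolding s_def by simp
        then show ?thesis by (metis append.assoc append_Cons append_Nil append_Nil2)
      qed
      have r1': "red C (chn p v n) ([] @ chn p v k @ [(p^^n) v])" using r1 unfolding eq .
      have r2: "red C ([] @ chn p v k @ [(p^^n) v]) ([] @ [v, s] @ [(p^^n) v])"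
        by (rule red_ctx[OF IH1])
      have r3: "red C ([] @ [v, s, (p^^n) v] @ []) ([] @ [v, (p^^n) v] @ [])"
        by (rule red3) (use bypass_rec[OF vN rk rn kk(2)] in \<open>simp add: s_def\<close>)
      show ?thesis using r1' r2 r3 by simp
    qed
  qed
qed

lemma Q: "\<forall>v. v \<in> N \<longrightarrow> 1 \<le> n \<longrightarrow> n \<le> lv v \<longrightarrow>
  (\<exists>Xs a i. red C (chn p v n) (Xs @ [a, (p^^n) v]) \<and> hd (Xs @ [a]) = v \<and> a \<in> N \<and> isrec a i \<and>
     (p^^i) a = (p^^n) v \<and> int (length Xs) \<le> Max ((\<lambda>l. lam ((p^^l) v)) ` {1..n}) - lam ((p^^n) v))"
proof (induction n rule: less_induct)
  case (less n)
  show ?case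
  proof (intro allI impI)
    fix v assume vN: "v \<in> N" and n1: "1 \<le> n" and nl: "n \<le> lv v"
    let ?f = "\<lambda>l. lam ((p^^l) v)"
    define S where "S = {1..n}"
    define M where "M = Max (?f ` S)"
    define k where "k = Max {l\<in>S. ?f l = M}"
    have finS: "finite S" "S \<noteq> {}" using n1 unfolding S_def by auto
    have Mm: "M \<in> ?f ` S" unfolding M_def using finS by simp
    have Mge: "\<forall>l\<in>S. ?f l \<le> M" unfolding M_def using finS by simp
    have finK: "finite {l\<in>S. ?f l = M}" "{l\<in>S. ?f l = M} \<noteq> {}" using finS Mm by auto
    have kK: "k \<in> S" "?f k = M" using Max_in[OF finK] unfolding k_def by auto
    have kgt: "\<forall>l\<in>S. k < l \<longrightarrow> ?f l < M"
    proof (intro ballI impI)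
      fix l assume "l \<in> S" "k < l"
      then have "l \<notin> {l\<in>S. ?f l = M}" using Max_ge[OF finK(1)] unfolding k_def by fastforce
      then show "?f l < M" using Mge \<open>l \<in> S\<close> by fastforce
    qed
    have kk: "1 \<le> k" "k \<le> n" using kK(1) unfolding S_def by auto
    have rk: "isrec v k" unfolding isrec_def using kk nl Mge kK unfolding S_def by auto
    show "\<exists>Xs a i. red C (chn p v n) (Xs @ [a, (p^^n) v]) \<and> hd (Xs @ [a]) = v \<and> a \<in> N \<and> isrec a i \<and>
     (p^^i) a = (p^^n) v \<and> int (length Xs) \<le> Max (?f ` {1..n}) - lam ((p^^n) v)"
    proof (cases "k = n")
      case True
      have "red C (chn p v n) ([] @ [v, (p^^n) v])" using P vN rk True by simp
      moreover have "int (length ([]::'n list)) \<le> Max (?f ` {1..n}) - lam ((p^^n) v)"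
        using kK True unfolding M_def S_def by simp
      ultimately show ?thesis using vN rk True by (intro exI[of _ "[]"] exI[of _ v] exI[of _ n]) simp
    next
      case False
      then have kn: "k < n" using kk by simp
      define s where "s = (p^^k) v"
      have sN: "s \<in> N" "lv s = lv v - k" using iter vN kk nl unfolding s_def by auto
      have w: "(p^^(n-k)) s = (p^^n) v" unfolding s_def using kn by (simp add: fp)
      obtain Xs a i where IH: "red C (chn p s (n-k)) (Xs @ [a, (p^^n) v])" "hd (Xs @ [a]) = s" "a \<in> N"
        "isrec a i" "(p^^i) a = (p^^n) v"
        "int (length Xs) \<le> Max ((\<lambda>l. lam ((p^^l) s)) ` {1..n-k}) - lam ((p^^n) v)"
      proof -
        have c: "n - k < n" "1 \<le> n - k" "n - k \<le> lv s" using kk kn sN nl by auto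
        have "\<exists>Xs a i. red C (chn p s (n-k)) (Xs @ [a, (p^^(n-k)) s]) \<and> hd (Xs @ [a]) = s \<and> a \<in> N \<and> isrec a i \<and>
          (p^^i) a = (p^^(n-k)) s \<and> int (length Xs) \<le> Max ((\<lambda>l. lam ((p^^l) s)) ` {1..n-k}) - lam ((p^^(n-k)) s)"
          using less.IH[OF c(1)] sN(1) c(2,3) by blast
        then show ?thesis using that unfolding w by blast
      qed
      have M': "Max ((\<lambda>l. lam ((p^^l) s)) ` {1..n-k}) \<le> M - 1"
      proof (subst Max_le_iff)
        show "finite ((\<lambda>l. lam ((p^^l) s)) ` {1..n-k})" by simp
        show "(\<lambda>l. lam ((p^^l) s)) ` {1..n-k} \<noteq> {}" using kn by simp
        show "\<forall>a\<in>(\<lambda>l. lam ((p^^l) s)) ` {1..n-k}. a \<le> M - 1"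
        proof
          fix x assume "x \<in> (\<lambda>l. lam ((p^^l) s)) ` {1..n-k}"
          then obtain l where l: "1 \<le> l" "l \<le> n - k" "x = lam ((p^^l) s)" by auto
          have "x = ?f (l + k)" unfolding l(3) s_def by (simp add: fp)
          moreover have "l + k \<in> S" "k < l + k" using l kn unfolding S_def by auto
          ultimately show "x \<le> M - 1" using kgt by fastforce
        qed
      qed
      have split: "chn p v n = butlast (chn p v k) @ chn p s (n-k) @ []"
        using chn_split[of p v k "n-k"] kn unfolding s_def by simp
      have r1: "red C (chn p v n) (butlast (chn p v k) @ (Xs @ [a, (p^^n) v]) @ [])"
        unfolding split by (rule red_ctx[OF IH(1)])
      obtain T where T: "Xs @ [a, (p^^n) v] = s # T" using IH(2)
        by (cases Xs) auto
      have eq: "butlast (chn p v k) @ (Xs @ [a, (p^^n) v]) @ [] = [] @ chn p v k @ T"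
      proof -
        have "chn p v k = butlast (chn p v k) @ [s]"
          using append_butlast_last_id[OF chn_ne[of p v k]] unfolding s_def by simp
        then show ?thesis unfolding T by (metis append.assoc append_Cons append_Nil append_Nil2)
      qed
      have r2: "red C ([] @ chn p v k @ T) ([] @ [v, s] @ T)"
        by (rule red_ctx) (use P vN rk in \<open>simp add: s_def\<close>)
      have fin: "red C (chn p v n) ((v # Xs) @ [a, (p^^n) v])"
        using r1 r2 T unfolding eq by simp
      have "int (length (v # Xs)) \<le> Max (?f ` {1..n}) - lam ((p^^n) v)"
        using IH(6) M' unfolding M_def S_def by simp
      then show ?thesis using fin IH(3-5)
        by (intro exI[of _ "v # Xs"] exI[of _ a] exI[of _ i]) simp
    qed
  qed
qed

lemma Z: assumes a1: "a1 \<in> N" "isrec a1 i" "(p^^i) a1 = z" and b1: "b1 \<in> N" "isrec b1 j" "(p^^j) b1 = z"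
  shows "C z \<inter> C b1 \<subseteq> C a1"
proof
  fix e assume e: "e \<in> C z \<inter> C b1"
  have jp: "1 \<le> j" "j \<le> lv b1" using isrec_pos[OF b1(2)] by auto
  have zN: "lv z = lv b1 - j" using iter[OF b1(1) jp(2)] b1(3) by auto
  obtain k where k: "k \<le> lv b1" "e \<in> B ((p^^k) b1)" "k = 0 \<or> isrec b1 k" using CW[OF b1(1)] e by blast
  have alt: "(\<exists>kk k0. 1 \<le> k0 \<and> k0 \<le> kk \<and> kk \<le> lv z \<and> lam ((p^^k0) z) \<ge> lam z \<and> e \<in> B ((p^^kk) z))
          \<or> (\<exists>t kk. t \<in> N \<and> kk \<le> lv t \<and> (p^^kk) t = z \<and> e \<in> B t)"
  proof (cases "k \<le> j")
    case True
    have tN: "(p^^k) b1 \<in> N" "lv ((p^^k) b1) = lv b1 - k" using iter[OF b1(1)] k(1) by auto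
    have "(p^^(j-k)) ((p^^k) b1) = z" using True b1(3) by (simp add: fp)
    then show ?thesis using tN k(2) True jp by (intro disjI2 exI[of _ "(p^^k) b1"] exI[of _ "j-k"]) auto
  next
    case False
    then have rk: "isrec b1 k" using k(3) by auto
    have eqk: "(p^^(k-j)) z = (p^^k) b1" using False b1(3)[symmetric] by (simp add: fp)
    have "lam z \<le> lam ((p^^k) b1)" using rk jp b1(3) False unfolding isrec_def by auto
    then show ?thesis using eqk k(1,2) False zN
      by (intro disjI1 exI[of _ "k-j"] exI[of _ "k-j"]) auto
  qed
  show "e \<in> C a1" by (rule G[OF a1(1,2) a1(3)[symmetric]]) (use e alt in auto)
qed

lemma Qb: assumes "v \<in> N" "1 \<le> n" "n \<le> lv v"
  shows "\<exists>Xs a i. red C (chn p v n) (Xs @ [a, (p^^n) v]) \<and> a \<in> N \<and> isrec a i \<and>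
     (p^^i) a = (p^^n) v \<and> length Xs \<le> q"
proof -
  obtain Xs a i where h: "red C (chn p v n) (Xs @ [a, (p^^n) v])" "a \<in> N" "isrec a i"
     "(p^^i) a = (p^^n) v" "int (length Xs) \<le> Max ((\<lambda>l. lam ((p^^l) v)) ` {1..n}) - lam ((p^^n) v)"
    using Q assms by blast
  have "Max ((\<lambda>l. lam ((p^^l) v)) ` {1..n}) \<le> int q - 1"
    using assms(2) lam_bounds by (subst Max_le_iff) auto
  moreover have "-1 \<le> lam ((p^^n) v)" using lam_bounds by simp
  ultimately have "length Xs \<le> q" using h(5) by linarith
  then show ?thesis using h by blast
qed

lemma main_path: assumes xN: "x \<in> N" and yN: "y \<in> N" and tp: "is_tpath N r p xs x y"
  shows "comb_length_le C xs (2*q+1)"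
proof -
  obtain a b where ab: "take (Suc a) xs = chn p x a" "drop a xs = rev (chn p y b)" "a \<le> lv x" "b \<le> lv y"
     "length xs = a + Suc b"
    using tpath_struct[OF tp xN yN] by blast
  have pa: "xs ! a = (p^^a) x"
    using arg_cong[OF ab(1), of "\<lambda>l. l ! a"] chn_nth[of a a p x] by simp
  have pb: "xs ! a = (p^^b) y"
  proof -
    have "xs ! a = drop a xs ! 0" using ab(5) by simp
    also have "\<dots> = rev (chn p y b) ! 0" using ab(2) by simp
    also have "\<dots> = (p^^b) y" by (simp add: rev_nth chn_nth)
    finally show ?thesis .
  qed
  define z where "z = (p^^a) x"
  have zb: "(p^^b) y = z" using pa pb z_def by simp
  have xs_eq: "xs = chn p x a @ tl (rev (chn p y b))"
  proof -
    have "xs = take (Suc a) xs @ drop (Suc a) xs" by simp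
    moreover have "drop (Suc a) xs = tl (drop a xs)" by (simp add: drop_Suc tl_drop)
    ultimately show ?thesis using ab(1,2) by simp
  qed
  have rv: "rev (chn p y b) = [z] @ tl (rev (chn p y b))"
  proof -
    have "hd (rev (chn p y b)) = z" using zb by (simp add: hd_rev)
    then show ?thesis by (metis append_Cons append_Nil chn_ne list.collapse rev_is_Nil_conv)
  qed
  show ?thesis
  proof (cases "a = 0")
    case a0: True
    have xs2: "xs = rev (chn p y b)" using ab(2) a0 by simp
    show ?thesis
    proof (cases "b = 0")
      case True
      then have "length xs = 1" using ab(5) a0 by simp
      then show ?thesis unfolding comb_length_le_def by (intro exI[of _ xs]) simp
    next
      case False
      then obtain Ys b1 j where Y: "red C (chn p y b) (Ys @ [b1, (p^^b) y])" "length Ys \<le> q"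
        using Qb[OF yN _ ab(4)] by force
      have "red C xs (rev (Ys @ [b1, (p^^b) y]))" unfolding xs2 by (rule red_rev[OF Y(1)])
      then show ?thesis unfolding comb_length_le_def using Y(2)
        by (intro exI[of _ "rev (Ys @ [b1, (p^^b) y])"]) auto
    qed
  next
    case an0: False
    obtain Xs a1 i where X: "red C (chn p x a) (Xs @ [a1, z])" "a1 \<in> N" "isrec a1 i" "(p^^i) a1 = z"
      "length Xs \<le> q"
      using Qb[OF xN _ ab(3)] an0 z_def by force
    show ?thesis
    proof (cases "b = 0")
      case True
      then have xs2: "xs = chn p x a" using xs_eq by simp
      show ?thesis unfolding comb_length_le_def using X(1,5) xs2
        by (intro exI[of _ "Xs @ [a1, z]"]) auto
    next
      case False
      obtain Ys b1 j where Y: "red C (chn p y b) (Ys @ [b1, z])" "b1 \<in> N" "isrec b1 j" "(p^^j) b1 = z"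
        "length Ys \<le> q"
        using Qb[OF yN _ ab(4)] False zb by force
      have r1: "red C ([] @ chn p x a @ tl (rev (chn p y b))) ([] @ (Xs @ [a1, z]) @ tl (rev (chn p y b)))"
        by (rule red_ctx[OF X(1)])
      have e1: "[] @ (Xs @ [a1, z]) @ tl (rev (chn p y b)) = (Xs @ [a1]) @ rev (chn p y b) @ []"
        using rv by (metis append.assoc append_Cons append_Nil append_Nil2)
      have r2: "red C ((Xs @ [a1]) @ rev (chn p y b) @ []) ((Xs @ [a1]) @ rev (Ys @ [b1, z]) @ [])"
        by (rule red_ctx[OF red_rev[OF Y(1)]])
      have e2: "(Xs @ [a1]) @ rev (Ys @ [b1, z]) @ [] = Xs @ [a1, z, b1] @ rev Ys" by simp
      have r3: "red C (Xs @ [a1, z, b1] @ rev Ys) (Xs @ [a1, b1] @ rev Ys)"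
        by (rule red3[where C=C and a=a1 and v=z and b=b1, OF Z[OF X(2,3,4) Y(2,3,4)]])
      have "red C xs (Xs @ [a1, b1] @ rev Ys)"
        using r1 r2 r3 unfolding xs_eq e1[symmetric] e2[symmetric] by simp
      then show ?thesis unfolding comb_length_le_def using X(5) Y(5)
        by (intro exI[of _ "Xs @ [a1, b1] @ rev Ys"]) auto
    qed
  qed
qed

lemma diam: "comb_diameter N r p C \<le> 2*q+1"
  unfolding comb_diameter_def by (rule Least_le) (use main_path in blast)

end

theorem lemma4p5:
  fixes V :: "'a set" and E :: "'a \<Rightarrow> 'a \<Rightarrow> bool"
    and N :: "'n set" and r :: 'n and p :: "'n \<Rightarrow> 'n" and B :: "'n \<Rightarrow> 'a set"
    and d q :: nat and k :: real and m :: "nat \<Rightarrow> nat"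
  assumes "graph V E"
    and "rooted_tree N r p"
    and "tree_decomposition V E N r p B"
    and "\<forall>v\<in>N. level r p v \<le> d"
    and "k \<ge> 1"
    and "\<forall>j<q. m j > 0 \<and> real (m j) = k powr (real j / real q) * real d / k"
  shows "comb_diameter N r p (new_bags q m N r p B) \<le> 2 * q + 1"
proof -
  interpret TDL V E N r p B q m using assms(2,3) by unfold_locales
  show ?thesis using diam by simp
qed

end
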